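(* Let $D_G$ be a weighted oriented graph on vertex set $\{x_1,\ldots,x_n\}$ and $I=I(D_G)$. Construct the simple graph $G^D$ with vertex set $\{x_{1,1},\ldots,x_{n,1}\}\cup\{x_{k,2},\ldots,x_{k,w(k)} : x_k \text{ is not a sink and } w(k)\ne 1\}$ and edge set $E(G^D)=\bigcup_{(x_i,x_j)\in E(D_G)}\{\{x_{i,1},x_{j,1}\},\{x_{i,2},x_{j,1}\},\ldots,\{x_{i,w(i)},x_{j,1}\}\}$. Then $(I^{\vee}(\mathrm{pol}))^{\vee}=I(G^D)$.
   Context: A weighted oriented graph $D_G$ with underlying simple graph $G$ is an orientation of the edges with weights $w(k)=w(x_k)\in\mathbb{Z}_{>0}$; $(x_i,x_j)$ denotes an edge oriented from $x_i$ to $x_j$; a sink is a vertex all of whose edges point towards it; sources have weight $1$ by convention. $I(D_G)=\langle x_ix_j^{w(j)}:(x_i,x_j)\in E(D_G)\rangle\subseteq A=K[x_1,\ldots,x_n]$; for a simple graph $G'$, $I(G')$ is the usual squarefree edge ideal. Alexander dual (Miller): for $\mathbf b\in\mathbb N^n$ let $\mathbf m^{\mathbf b}=\langle x_i^{b_i}: b_i\ge1\rangle$; every monomial ideal $I$ is an irredundant intersection of such irreducible ideals, forming the set $\mathrm{Irr}(I)$. Let $\mathbf a_I$ be the exponent vector of the lcm of the minimal generators of $I$. For $\mathbf 0\preceq\mathbf b\preceq\mathbf a$, $\mathbf b^{\mathbf a}$ has $i$-th coordinate $a_i+1-b_i$ if $b_i\ge1$ and $0$ otherwise. Then $I^{\vee}=\langle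 \mathbf x^{\mathbf b^{\mathbf a_I}} : \mathbf m^{\mathbf b}\in\mathrm{Irr}(I)\rangle$; for squarefree ideals this is the usual Alexander dual. Polarization: $x_i^{a}(\mathrm{pol})=\prod_{j=1}^{a}x_{i,j}$, $\mathbf x^{\mathbf a}(\mathrm{pol})=\prod_i x_i^{a_i}(\mathrm{pol})$, and for a monomial ideal $I$ with minimal generators $\mathbf x^{\mathbf a_1},\ldots,\mathbf x^{\mathbf a_m}$, $I(\mathrm{pol})=\langle\mathbf x^{\mathbf a_1}(\mathrm{pol}),\ldots,\mathbf x^{\mathbf a_m}(\mathrm{pol})\rangle$ in $K[x_{i,j}:1\le i\le n,1\le j\le r_i]$, $r_i$ the exponent of $x_i$ in the lcm of the generators. *)

theory Defs
  imports Main
begin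

text \<open>Monomials in variables of type 'v are exponent vectors with finite support.
A monomial ideal is represented by the set of monomials it contains.\<close>

definition monoms :: "('v \<Rightarrow> nat) set" where
  "monoms = {m. finite {v. m v \<noteq> 0}}"

definition mdvd :: "('v \<Rightarrow> nat) \<Rightarrow> ('v \<Rightarrow> nat) \<Rightarrow> bool" where
  "mdvd g m \<longleftrightarrow> (\<forall>v. g v \<le> m v)"

definition mono_ideal :: "('v \<Rightarrow> nat) set \<Rightarrow> ('v \<Rightarrow> nat) set" where
  "mono_ideal G = {m \<in> monoms. \<exists>g\<in>G. mdvd g m}"

definition mingens :: "('v \<Rightarrow> nat) set \<Rightarrow> ('v \<Rightarrow> nat) set" where
  "mingens I = {g \<in> I. \<forall>h\<in>I. mdvd h g \<longrightarrow> h = g}"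

definition lcm_exp :: "('v \<Rightarrow> nat) set \<Rightarrow> ('v \<Rightarrow> nat)" where
  "lcm_exp I = (\<lambda>v. Max (insert 0 ((\<lambda>g. g v) ` mingens I)))"

text \<open>Irreducible ideal m^b = < x_i^(b_i) : b_i >= 1 >.\<close>
definition irr_ideal :: "('v \<Rightarrow> nat) \<Rightarrow> ('v \<Rightarrow> nat) set" where
  "irr_ideal b = {m \<in> monoms. \<exists>v. 1 \<le> b v \<and> b v \<le> m v}"

definition irr_decomp :: "('v \<Rightarrow> nat) set \<Rightarrow> ('v \<Rightarrow> nat) set \<Rightarrow> bool" where
  "irr_decomp I S \<longleftrightarrow> finite S \<and> S \<subseteq> monoms \<and>
     I = monoms \<inter> (\<Inter>b\<in>S. irr_ideal b) \<and>
     (\<forall>b\<in>S. I \<noteq> monoms \<inter> (\<Inter>c\<in>S - {b}. irr_ideal c))"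

definition Irr_set :: "('v \<Rightarrow> nat) set \<Rightarrow> ('v \<Rightarrow> nat) set" where
  "Irr_set I = (THE S. irr_decomp I S)"

definition dual_exp :: "('v \<Rightarrow> nat) \<Rightarrow> ('v \<Rightarrow> nat) \<Rightarrow> ('v \<Rightarrow> nat)" where
  "dual_exp a b = (\<lambda>v. if 1 \<le> b v then a v + 1 - b v else 0)"

definition alex_dual :: "('v \<Rightarrow> nat) set \<Rightarrow> ('v \<Rightarrow> nat) set" where
  "alex_dual I = mono_ideal (dual_exp (lcm_exp I) ` Irr_set I)"

text \<open>Polarization: x_i^a(pol) = x_{i,1} ... x_{i,a}.\<close>
definition pol_mono :: "('v \<Rightarrow> nat) \<Rightarrow> ('v \<times> nat \<Rightarrow> nat)" where
  "pol_mono m = (\<lambda>(i, j). if 1 \<le> j \<and> j \<le> m i then 1 else 0)"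

definition pol :: "('v \<Rightarrow> nat) set \<Rightarrow> ('v \<times> nat \<Rightarrow> nat) set" where
  "pol I = mono_ideal (pol_mono ` mingens I)"

definition sqf :: "'v set \<Rightarrow> ('v \<Rightarrow> nat)" where
  "sqf A = (\<lambda>v. if v \<in> A then 1 else 0)"

definition edge_ideal :: "'v set set \<Rightarrow> ('v \<Rightarrow> nat) set" where
  "edge_ideal E = mono_ideal (sqf ` E)"

definition source :: "(nat \<times> nat) set \<Rightarrow> nat \<Rightarrow> bool" where
  "source E k \<longleftrightarrow> (\<forall>i. (i, k) \<notin> E)"

definition sink :: "(nat \<times> nat) set \<Rightarrow> nat \<Rightarrow> bool" where
  "sink E k \<longleftrightarrow> (\<forall>j. (k, j) \<notin> E)"

definition weighted_oriented_graph :: "nat \<Rightarrow> (nat \<times> nat) set \<Rightarrow> (nat \<Rightarrow> nat) \<Rightarrow> bool" where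
  "weighted_oriented_graph n E w \<longleftrightarrow>
     E \<subseteq> {1..n} \<times> {1..n} \<and>
     (\<forall>i j. (i, j) \<in> E \<longrightarrow> i \<noteq> j \<and> (j, i) \<notin> E) \<and>
     (\<forall>k\<in>{1..n}. 0 < w k) \<and>
     (\<forall>k\<in>{1..n}. source E k \<longrightarrow> w k = 1)"

definition edge_mono :: "(nat \<Rightarrow> nat) \<Rightarrow> nat \<Rightarrow> nat \<Rightarrow> (nat \<Rightarrow> nat)" where
  "edge_mono w i j = (\<lambda>v. (if v = i then 1 else 0) + (if v = j then w j else 0))"

definition wog_ideal :: "(nat \<times> nat) set \<Rightarrow> (nat \<Rightarrow> nat) \<Rightarrow> (nat \<Rightarrow> nat) set" where
  "wog_ideal E w = mono_ideal {edge_mono w i j | i j. (i, j) \<in> E}"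

text \<open>Vertex set and edge set of G^D (vertex x_{k,l} is the pair (k,l)).\<close>
definition GD_vertices :: "nat \<Rightarrow> (nat \<times> nat) set \<Rightarrow> (nat \<Rightarrow> nat) \<Rightarrow> (nat \<times> nat) set" where
  "GD_vertices n E w = {(k, 1) | k. k \<in> {1..n}} \<union>
     {(k, l) | k l. k \<in> {1..n} \<and> \<not> sink E k \<and> w k \<noteq> 1 \<and> 2 \<le> l \<and> l \<le> w k}"

definition GD_edges :: "(nat \<times> nat) set \<Rightarrow> (nat \<Rightarrow> nat) \<Rightarrow> (nat \<times> nat) set set" where
  "GD_edges E w = (\<Union>(i, j)\<in>E. {{(i, l), (j, 1)} | l. 1 \<le> l \<and> l \<le> w i})"

end

theory Submission
  imports Defs
begin


definition irr_int :: "('v \<Rightarrow> nat) set \<Rightarrow> ('v \<Rightarrow> nat) set" where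
  "irr_int S = monoms \<inter> (\<Inter>b\<in>S. irr_ideal b)"

lemma mdvd_refl[simp]: "mdvd m m" by (simp add: mdvd_def)
lemma mdvd_trans: "mdvd a b \<Longrightarrow> mdvd b c \<Longrightarrow> mdvd a c"
  unfolding mdvd_def by (auto intro: le_trans)
lemma mdvd_antisym: "mdvd a b \<Longrightarrow> mdvd b a \<Longrightarrow> a = b"
  unfolding mdvd_def by (rule ext) (meson antisym)

lemma monoms_mdvd:
  assumes "mdvd g m" "m \<in> monoms" shows "g \<in> monoms"
proof -
  have "{v. g v \<noteq> 0} \<subseteq> {v. m v \<noteq> 0}" using assms(1) unfolding mdvd_def
    by (metis (mono_tags, lifting) Collect_mono le_zero_eq)
  then show ?thesis using assms(2) finite_subset unfolding monoms_def by blast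
qed

lemma mono_ideal_mem: "m \<in> mono_ideal G \<longleftrightarrow> m \<in> monoms \<and> (\<exists>g\<in>G. mdvd g m)"
  by (simp add: mono_ideal_def)

lemma mono_ideal_sub: "mono_ideal G \<subseteq> monoms" by (auto simp: mono_ideal_def)

lemma mingens_sub: "mingens K \<subseteq> K" by (auto simp: mingens_def)

lemma exists_mingen:
  assumes "K \<subseteq> monoms" "m \<in> K"
  shows "\<exists>g\<in>mingens K. mdvd g m"
proof -
  define mu where "mu h = (\<Sum>v\<in>{v. m v \<noteq> 0}. h v)" for h :: "'a \<Rightarrow> nat"
  have fin: "finite {v. m v \<noteq> 0}" using assms monoms_def by auto
  obtain h where h: "h \<in> K \<and> mdvd h m" and hmin: "\<forall>y. y \<in> K \<and> mdvd y m \<longrightarrow> mu h \<le> mu y"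
    using ex_has_least_nat[of "\<lambda>h. h \<in> K \<and> mdvd h m" m mu] assms(2) by auto
  have "h \<in> mingens K"
    unfolding mingens_def
  proof (safe)
    show "h \<in> K" using h by simp
    fix h' assume h': "h' \<in> K" "mdvd h' h"
    then have "mdvd h' m" using h mdvd_trans by blast
    then have "mu h \<le> mu h'" using hmin h' by blast
    show "h' = h"
    proof (rule ccontr)
      assume ne: "h' \<noteq> h"
      then obtain v where v: "h' v \<noteq> h v" by auto
      then have lt: "h' v < h v" using h'(2) mdvd_def by (metis le_neq_implies_less)
      then have "m v \<noteq> 0" using h mdvd_def by (metis gr_implies_not0 le_0_eq)
      then have "mu h' < mu h" unfolding mu_def
        using sum_strict_mono_ex1[OF fin, of h' h] h'(2) lt unfolding mdvd_def by auto
      then show False using \<open>mu h \<le> mu h'\<close> by simp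
    qed
  qed
  then show ?thesis using h by blast
qed

lemma mingens_mono_ideal_sub:
  assumes "G \<subseteq> monoms" shows "mingens (mono_ideal G) \<subseteq> G"
proof
  fix g assume g: "g \<in> mingens (mono_ideal G)"
  then have "g \<in> mono_ideal G" by (simp add: mingens_def)
  then obtain h where h: "h \<in> G" "mdvd h g" by (auto simp: mono_ideal_def)
  then have "h \<in> mono_ideal G" using assms mdvd_refl unfolding mono_ideal_def by blast
  then have "h = g" using g h(2) by (auto simp: mingens_def)
  then show "g \<in> G" using h by simp
qed

lemma mingens_forall:
  assumes "G \<subseteq> monoms" and up: "\<And>e e'. mdvd e e' \<Longrightarrow> P e \<Longrightarrow> P e'"
  shows "(\<forall>e\<in>mingens (mono_ideal G). P e) \<longleftrightarrow> (\<forall>e\<in>G. P e)"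
proof
  assume A: "\<forall>e\<in>mingens (mono_ideal G). P e"
  show "\<forall>e\<in>G. P e"
  proof
    fix e assume "e \<in> G"
    then have "e \<in> mono_ideal G" using assms(1) mdvd_refl unfolding mono_ideal_def by blast
    then obtain g where "g \<in> mingens (mono_ideal G)" "mdvd g e"
      using exists_mingen[OF mono_ideal_sub] by blast
    then show "P e" using A up by blast
  qed
next
  assume "\<forall>e\<in>G. P e" then show "\<forall>e\<in>mingens (mono_ideal G). P e"
    using mingens_mono_ideal_sub[OF assms(1)] by blast
qed

lemma mingens_antichain:
  assumes "G \<subseteq> monoms" and anti: "\<And>g h. g \<in> G \<Longrightarrow> h \<in> G \<Longrightarrow> mdvd h g \<Longrightarrow> h = g"
  shows "mingens (mono_ideal G) = G"
proof
  show "mingens (mono_ideal G) \<subseteq> G" by (rule mingens_mono_ideal_sub[OF assms(1)])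
  show "G \<subseteq> mingens (mono_ideal G)"
  proof
    fix g assume g: "g \<in> G"
    show "g \<in> mingens (mono_ideal G)" unfolding mingens_def
    proof (safe)
      show "g \<in> mono_ideal G" using g assms(1) mdvd_refl unfolding mono_ideal_def by blast
      fix h assume "h \<in> mono_ideal G" "mdvd h g"
      then obtain g' where "g' \<in> G" "mdvd g' h" by (auto simp: mono_ideal_def)
      then have "g' = g" using anti g \<open>mdvd h g\<close> mdvd_trans by blast
      then show "h = g" using \<open>mdvd g' h\<close> \<open>mdvd h g\<close> mdvd_antisym by blast
    qed
  qed
qed

lemma irr_ideal_up: "x \<in> irr_ideal b \<Longrightarrow> mdvd x y \<Longrightarrow> y \<in> monoms \<Longrightarrow> y \<in> irr_ideal b"
  unfolding irr_ideal_def mdvd_def by (auto intro: le_trans)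

lemma irr_key:
  assumes "finite T" "irr_int T \<subseteq> irr_ideal b"
  shows "\<exists>c\<in>T. irr_ideal c \<subseteq> irr_ideal b"
proof (rule ccontr)
  assume "\<not> ?thesis"
  then have "\<forall>c\<in>T. \<exists>x. x \<in> irr_ideal c \<and> x \<notin> irr_ideal b" by blast
  then obtain f where f: "\<And>c. c\<in>T \<Longrightarrow> f c \<in> irr_ideal c \<and> f c \<notin> irr_ideal b" by metis
  define m where "m = (\<lambda>v. Max (insert 0 ((\<lambda>c. f c v) ` T)))"
  have fm: "f c \<in> monoms" if "c\<in>T" for c using f[OF that] unfolding irr_ideal_def by blast
  have le: "f c v \<le> m v" if "c \<in> T" for c v unfolding m_def using assms(1) that by (intro Max_ge) auto
  have att: "m v = 0 \<or> (\<exists>c\<in>T. m v = f c v)" for v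
  proof -
    have "m v \<in> insert 0 ((\<lambda>c. f c v) ` T)" unfolding m_def
      by (rule Max_in) (use assms(1) in auto)
    then show ?thesis by auto
  qed
  have sub: "{v. m v \<noteq> 0} \<subseteq> (\<Union>c\<in>T. {v. f c v \<noteq> 0})"
  proof
    fix v assume "v \<in> {v. m v \<noteq> 0}"
    then show "v \<in> (\<Union>c\<in>T. {v. f c v \<noteq> 0})" using att[of v] by auto
  qed
  have fin: "finite (\<Union>c\<in>T. {v. f c v \<noteq> 0})"
    using assms(1) fm by (simp add: monoms_def)
  have mm: "m \<in> monoms" unfolding monoms_def using finite_subset[OF sub fin] by simp
  have "m \<in> irr_ideal c" if "c \<in> T" for c
    using irr_ideal_up[of "f c" c m] f[OF that] le[OF that] mm by (auto simp: mdvd_def)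
  then have "m \<in> irr_int T" using mm by (auto simp: irr_int_def)
  then have "m \<in> irr_ideal b" using assms(2) by blast
  then obtain v where v: "1 \<le> b v" "b v \<le> m v" by (auto simp: irr_ideal_def)
  then obtain c where "c \<in> T" "m v = f c v" using att[of v] by auto
  then have "f c \<in> irr_ideal b" using v fm by (auto simp: irr_ideal_def)
  then show False using f \<open>c \<in> T\<close> by blast
qed

definition xpow :: "'v \<Rightarrow> nat \<Rightarrow> ('v \<Rightarrow> nat)" where
  "xpow v k = (\<lambda>u. if u = v then k else 0)"

lemma xpow_monoms: "xpow v k \<in> monoms"
proof -
  have "{u. xpow v k u \<noteq> 0} \<subseteq> {v}" by (auto simp: xpow_def)
  then show ?thesis unfolding monoms_def using finite_subset[of _ "{v}"] by simp
qed

lemma irr_ideal_sub_aux: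
  assumes "irr_ideal c \<subseteq> irr_ideal b" "1 \<le> c v"
  shows "1 \<le> b v \<and> b v \<le> c v"
proof -
  have "xpow v (c v) \<in> irr_ideal c" using assms(2) xpow_monoms
    by (auto simp: irr_ideal_def xpow_def)
  then have "xpow v (c v) \<in> irr_ideal b" using assms(1) by blast
  then obtain u where "1 \<le> b u" "b u \<le> xpow v (c v) u" by (auto simp: irr_ideal_def)
  then show ?thesis by (auto simp: xpow_def split: if_splits)
qed

lemma irr_ideal_inj:
  assumes "irr_ideal b = irr_ideal c" shows "b = c"
proof
  fix v
  show "b v = c v"
  proof (cases "1 \<le> b v")
    case True
    then have "1 \<le> c v \<and> c v \<le> b v" using irr_ideal_sub_aux[of b c v] assms by auto
    then show ?thesis using irr_ideal_sub_aux[of c b v] assms by auto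
  next
    case False
    then have "\<not> 1 \<le> c v" using irr_ideal_sub_aux[of c b v] assms by auto
    then show ?thesis using False by simp
  qed
qed

lemma irr_decomp_sub:
  assumes S: "irr_decomp I S" and T: "irr_decomp I T"
  shows "S \<subseteq> T"
proof
  fix b assume b: "b \<in> S"
  have IS: "I = irr_int S" and IT: "I = irr_int T" using S T by (auto simp: irr_decomp_def irr_int_def)
  have finS: "finite S" and finT: "finite T" using S T by (auto simp: irr_decomp_def)
  have "I \<subseteq> irr_ideal b" using IS b by (auto simp: irr_int_def)
  then obtain c where c: "c \<in> T" "irr_ideal c \<subseteq> irr_ideal b" using irr_key[OF finT] IT by metis
  have "I \<subseteq> irr_ideal c" using IT c(1) by (auto simp: irr_int_def)
  then obtain b' where b': "b' \<in> S" "irr_ideal b' \<subseteq> irr_ideal c" using irr_key[OF finS] IS by metis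
  have "b' = b"
  proof (rule ccontr)
    assume ne: "b' \<noteq> b"
    have sub: "monoms \<inter> (\<Inter>c\<in>S - {b}. irr_ideal c) \<subseteq> irr_ideal b"
    proof
      fix x assume "x \<in> monoms \<inter> (\<Inter>c\<in>S - {b}. irr_ideal c)"
      then have "x \<in> irr_ideal b'" using b'(1) ne by blast
      then show "x \<in> irr_ideal b" using b'(2) c(2) by blast
    qed
    have "I = monoms \<inter> (\<Inter>c\<in>S - {b}. irr_ideal c)"
    proof
      show "I \<subseteq> monoms \<inter> (\<Inter>c\<in>S - {b}. irr_ideal c)" using IS unfolding irr_int_def by blast
      show "monoms \<inter> (\<Inter>c\<in>S - {b}. irr_ideal c) \<subseteq> I"
      proof
        fix x assume x: "x \<in> monoms \<inter> (\<Inter>c\<in>S - {b}. irr_ideal c)"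
        then have "x \<in> irr_ideal b" using sub by blast
        then have "x \<in> irr_int S" using x unfolding irr_int_def by blast
        then show "x \<in> I" using IS by simp
      qed
    qed
    then show False using S b unfolding irr_decomp_def by blast
  qed
  then have "irr_ideal b = irr_ideal c" using b'(2) c(2) by (intro equalityI) simp_all
  then have "b = c" by (rule irr_ideal_inj)
  then show "b \<in> T" using c by simp
qed

lemma Irr_set_eq: "irr_decomp I S \<Longrightarrow> Irr_set I = S"
  unfolding Irr_set_def
proof (rule the_equality)
  fix T assume "irr_decomp I S" "irr_decomp I T"
  then show "T = S" using irr_decomp_sub[of I S T] irr_decomp_sub[of I T S] by blast
qed



lemma irredundant_sub:
  assumes "finite S0"
  shows "\<exists>S\<subseteq>S0. irr_int S = irr_int S0 \<and> (\<forall>b\<in>S. irr_int S0 \<noteq> irr_int (S - {b}))"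
proof -
  obtain S where S: "S \<subseteq> S0 \<and> irr_int S = irr_int S0"
    and Smin: "\<forall>S'. S' \<subseteq> S0 \<and> irr_int S' = irr_int S0 \<longrightarrow> card S \<le> card S'"
    using ex_has_least_nat[of "\<lambda>S. S \<subseteq> S0 \<and> irr_int S = irr_int S0" S0 card] by auto
  have finS: "finite S" using S assms finite_subset by blast
  have "irr_int S0 \<noteq> irr_int (S - {b})" if b: "b \<in> S" for b
  proof
    assume eq: "irr_int S0 = irr_int (S - {b})"
    have "S - {b} \<subseteq> S0" using S by blast
    then have "card S \<le> card (S - {b})" using Smin eq by metis
    moreover have "card (S - {b}) < card S" using card_Diff1_less[OF finS b] .
    ultimately show False by simp
  qed
  then show ?thesis using S by blast
qed

lemma decomp_exists:
  assumes finG: "finite G" and Gm: "G \<subseteq> monoms"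
  shows "\<exists>S. irr_decomp (mono_ideal G) S"
proof -
  define a where "a v = Max (insert 0 ((\<lambda>g. g v) ` G))" for v
  have ga: "g v \<le> a v" if "g \<in> G" for g v unfolding a_def using finG that by (intro Max_ge) auto
  have att: "a v = 0 \<or> (\<exists>g\<in>G. a v = g v)" for v
  proof -
    have "a v \<in> insert 0 ((\<lambda>g. g v) ` G)" unfolding a_def
      by (rule Max_in) (use finG in auto)
    then show ?thesis by auto
  qed
  define A where "A = {v. a v \<noteq> 0}"
  have subA: "A \<subseteq> (\<Union>g\<in>G. {v. g v \<noteq> 0})"
  proof
    fix v assume "v \<in> A"
    then show "v \<in> (\<Union>g\<in>G. {v. g v \<noteq> 0})" using att[of v] by (auto simp: A_def)
  qed
  have finU: "finite (\<Union>g\<in>G. {v. g v \<noteq> 0})"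
  proof (rule finite_UN_I[OF finG])
    fix g assume "g \<in> G" then show "finite {v. g v \<noteq> 0}" using Gm monoms_def by blast
  qed
  have finA: "finite A" using finite_subset[OF subA finU] .
  have am: "a \<in> monoms" using finA by (simp add: monoms_def A_def)
  define M where "M = Max (insert 0 (a ` A))"
  define S0 where "S0 = {b. (\<forall>v. b v \<le> a v) \<and> mono_ideal G \<subseteq> irr_ideal b}"
  have "S0 \<subseteq> {f. \<forall>x. (x \<in> A \<longrightarrow> f x \<in> {0..M}) \<and> (x \<notin> A \<longrightarrow> f x = 0)}"
  proof
    fix b assume "b \<in> S0"
    then have bl: "\<forall>v. b v \<le> a v" by (simp add: S0_def)
    have "a x \<le> M" if "x \<in> A" for x unfolding M_def using finA that by (intro Max_ge) auto
    then show "b \<in> {f. \<forall>x. (x \<in> A \<longrightarrow> f x \<in> {0..M}) \<and> (x \<notin> A \<longrightarrow> f x = 0)}"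
      using bl by (auto simp: A_def intro: le_trans) (metis le_zero_eq)
  qed
  then have finS0: "finite S0" using finite_set_of_finite_funs[OF finA, of "{0..M}" 0] finite_subset by blast
  have S0m: "S0 \<subseteq> monoms"
  proof
    fix b assume "b \<in> S0"
    then have "mdvd b a" by (simp add: S0_def mdvd_def)
    then show "b \<in> monoms" using monoms_mdvd am by blast
  qed
  have eq: "mono_ideal G = irr_int S0"
  proof
    show "mono_ideal G \<subseteq> irr_int S0" unfolding irr_int_def S0_def using mono_ideal_sub by blast
    show "irr_int S0 \<subseteq> mono_ideal G"
    proof
      fix m assume m: "m \<in> irr_int S0"
      show "m \<in> mono_ideal G"
      proof (rule ccontr)
        assume nm: "m \<notin> mono_ideal G"
        have mm: "m \<in> monoms" using m by (simp add: irr_int_def)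
        define b where "b v = (if m v < a v then m v + 1 else 0)" for v
        have "b \<in> S0" unfolding S0_def
        proof (safe)
          show "b v \<le> a v" for v by (simp add: b_def)
          fix x assume x: "x \<in> mono_ideal G"
          then obtain g where g: "g \<in> G" "mdvd g x" and xm: "x \<in> monoms" by (auto simp: mono_ideal_def)
          have "\<not> mdvd g m" using g(1) mm nm by (auto simp: mono_ideal_def)
          then obtain v where v: "m v < g v" by (auto simp: mdvd_def not_le)
          have "m v < a v" using v ga[OF g(1), of v] by simp
          then have "b v = m v + 1" by (simp add: b_def)
          moreover have "g v \<le> x v" using g(2) by (simp add: mdvd_def)
          ultimately have "1 \<le> b v \<and> b v \<le> x v" using v by simp
          then show "x \<in> irr_ideal b" using xm by (auto simp: irr_ideal_def)
        qed
        then have "m \<in> irr_ideal b" using m by (simp add: irr_int_def)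
        then obtain v where "1 \<le> b v" "b v \<le> m v" by (auto simp: irr_ideal_def)
        then show False by (simp add: b_def split: if_splits)
      qed
    qed
  qed
  obtain S where S: "S \<subseteq> S0" "irr_int S = irr_int S0" "\<forall>b\<in>S. irr_int S0 \<noteq> irr_int (S - {b})"
    using irredundant_sub[OF finS0] by blast
  have "irr_decomp (mono_ideal G) S"
    unfolding irr_decomp_def
    using S eq finS0 S0m finite_subset by (auto simp: irr_int_def)
  then show ?thesis by blast
qed

definition supp :: "('v \<Rightarrow> nat) \<Rightarrow> 'v set" where
  "supp m = {v. m v \<noteq> 0}"

definition transv :: "'v set set \<Rightarrow> 'v set \<Rightarrow> bool" where
  "transv F A \<longleftrightarrow> (\<forall>B\<in>F. A \<inter> B \<noteq> {})"

definition mintransv :: "'v set set \<Rightarrow> 'v set set" where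
  "mintransv F = {A. transv F A \<and> (\<forall>A'\<subseteq>A. transv F A' \<longrightarrow> A' = A)}"

lemma sqf_mdvd: "mdvd (sqf B) m \<longleftrightarrow> B \<subseteq> supp m"
  unfolding mdvd_def sqf_def supp_def
proof
  assume H: "\<forall>v. (if v \<in> B then 1 else 0) \<le> m v"
  show "B \<subseteq> {v. m v \<noteq> 0}"
  proof
    fix v assume "v \<in> B"
    then have "1 \<le> m v" using H by (metis (full_types))
    then show "v \<in> {v. m v \<noteq> 0}" by simp
  qed
next
  assume H: "B \<subseteq> {v. m v \<noteq> 0}"
  show "\<forall>v. (if v \<in> B then 1 else 0) \<le> m v"
  proof
    fix v show "(if v \<in> B then 1 else 0) \<le> m v" using H by (cases "v \<in> B") auto
  qed
qed

lemma supp_sqf[simp]: "supp (sqf B) = B" by (auto simp: supp_def sqf_def)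

lemma sqf_monoms: "finite B \<Longrightarrow> sqf B \<in> monoms"
  using supp_sqf[of B] by (simp add: monoms_def supp_def)

lemma sqf_inj: "sqf A = sqf B \<Longrightarrow> A = B"
proof -
  assume "sqf A = sqf B"
  then have "supp (sqf A) = supp (sqf B)" by simp
  then show "A = B" by simp
qed

lemma monoms_supp: "m \<in> monoms \<longleftrightarrow> finite (supp m)" by (simp add: monoms_def supp_def)

lemma mintransv_exists:
  assumes "finite F" "\<forall>B\<in>F. finite B" "transv F X"
  shows "\<exists>A\<in>mintransv F. A \<subseteq> X"
proof -
  define X' where "X' = X \<inter> \<Union>F"
  have finX': "finite X'" using assms(1,2) by (simp add: X'_def)
  have tX': "transv F X'" using assms(3) by (auto simp: transv_def X'_def)
  obtain A where A: "A \<subseteq> X' \<and> transv F A" and Amin: "\<forall>A'. A' \<subseteq> X' \<and> transv F A' \<longrightarrow> card A \<le> card A'"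
    using ex_has_least_nat[of "\<lambda>A. A \<subseteq> X' \<and> transv F A" X' card] tX' by auto
  have finA: "finite A" using A finX' finite_subset by blast
  have "A \<in> mintransv F"
    unfolding mintransv_def
  proof (intro CollectI conjI allI impI)
    show "transv F A" using A by simp
    fix A' assume "A' \<subseteq> A" "transv F A'"
    then have "card A \<le> card A'" using Amin A by blast
    moreover have "card A' \<le> card A" using card_mono[OF finA \<open>A' \<subseteq> A\<close>] .
    ultimately have "card A' = card A" by linarith
    then show "A' = A" using card_subset_eq[OF finA \<open>A' \<subseteq> A\<close>] by blast
  qed
  then show ?thesis using A X'_def by blast
qed

lemma mintransv_sub: "A \<in> mintransv F \<Longrightarrow> A \<subseteq> \<Union>F"
proof -
  assume A: "A \<in> mintransv F"
  have tA: "transv F A" and H: "\<forall>A'\<subseteq>A. transv F A' \<longrightarrow> A' = A" using A by (simp_all add: mintransv_def)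
  have t: "transv F (A \<inter> \<Union>F)" unfolding transv_def
  proof
    fix B assume B: "B \<in> F"
    then obtain x where "x \<in> A" "x \<in> B" using tA unfolding transv_def by blast
    then have "x \<in> A \<inter> \<Union>F \<inter> B" using B by blast
    then show "A \<inter> \<Union>F \<inter> B \<noteq> {}" by blast
  qed
  have "A \<inter> \<Union>F \<subseteq> A" by blast
  then have "A \<inter> \<Union>F = A" using H t by blast
  then show ?thesis by blast
qed

lemma mintransv_crit:
  assumes "A \<in> mintransv F" "v \<in> A" shows "\<exists>B\<in>F. v \<in> B \<and> B \<inter> A = {v}"
proof -
  have ne: "A - {v} \<noteq> A" using assms(2) by blast
  have "A - {v} \<subseteq> A" by blast
  then have "\<not> transv F (A - {v})" using assms(1) ne unfolding mintransv_def by blast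
  then obtain B where B: "B \<in> F" "(A - {v}) \<inter> B = {}" unfolding transv_def by blast
  moreover have "A \<inter> B \<noteq> {}" using assms(1) B(1) unfolding mintransv_def transv_def by blast
  then obtain x where x: "x \<in> A" "x \<in> B" by blast
  have "x = v"
  proof (rule ccontr)
    assume "x \<noteq> v" then have "x \<in> (A - {v}) \<inter> B" using x by blast
    then show False using B(2) by simp
  qed
  then have vB: "v \<in> B" using x by simp
  have "B \<inter> A = {v}"
  proof
    show "B \<inter> A \<subseteq> {v}" using B(2) by blast
    show "{v} \<subseteq> B \<inter> A" using vB assms(2) by blast
  qed
  then show ?thesis using B(1) vB by blast
qed

lemma mt_transv: "A \<in> mintransv F \<Longrightarrow> B \<in> F \<Longrightarrow> A \<inter> B \<noteq> {}"
  by (simp add: mintransv_def transv_def)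

lemma mt_min: "A \<in> mintransv F \<Longrightarrow> A' \<in> mintransv F \<Longrightarrow> A' \<subseteq> A \<Longrightarrow> A' = A"
  by (simp add: mintransv_def)

lemma sqf_dual:
  assumes finF: "finite F" and finB: "\<forall>B\<in>F. finite B"
  shows "alex_dual (mono_ideal (sqf ` F)) = {m \<in> monoms. transv F (supp m)}"
proof -
  define J where "J = mono_ideal (sqf ` F)"
  have Gm: "sqf ` F \<subseteq> monoms" using finB sqf_monoms by blast
  define F' where "F' = {B. sqf B \<in> mingens J}"
  have mgJ: "mingens J \<subseteq> sqf ` F" unfolding J_def by (rule mingens_mono_ideal_sub[OF Gm])
  have F'F: "F' \<subseteq> F" using mgJ sqf_inj by (auto simp: F'_def)
  have tr_eq: "transv F = transv F'"
  proof (rule ext, rule iffI)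
    fix A assume "transv F A" then show "transv F' A" using F'F by (auto simp: transv_def)
  next
    fix A assume tA: "transv F' A"
    show "transv F A" unfolding transv_def
    proof
      fix B assume B: "B \<in> F"
      have "sqf B \<in> J" unfolding J_def using B Gm mdvd_refl unfolding mono_ideal_def by blast
      then obtain g where g: "g \<in> mingens J" "mdvd g (sqf B)"
        using exists_mingen[of J] J_def mono_ideal_sub by blast
      then obtain B' where B': "g = sqf B'" using mgJ by blast
      then have "B' \<in> F'" using g by (simp add: F'_def)
      moreover have "B' \<subseteq> B" using g(2) B' sqf_mdvd[of B' "sqf B"] by simp
      ultimately show "A \<inter> B \<noteq> {}" using tA by (auto simp: transv_def)
    qed
  qed
  define MT where "MT = mintransv F"
  have MT': "MT = mintransv F'" unfolding MT_def mintransv_def tr_eq ..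
  define V where "V = \<Union>F"
  have finV: "finite V" using finF finB by (simp add: V_def)
  have MTV: "A \<subseteq> V" if "A \<in> MT" for A using mintransv_sub that by (simp add: MT_def V_def)
  have "MT \<subseteq> Pow V" using MTV by blast
  then have finMT: "finite MT" using finite_subset finV by (metis finite_Pow_iff)
  have finA: "finite A" if "A \<in> MT" for A using MTV[OF that] finV finite_subset by blast
  have irr_sqf: "m \<in> irr_ideal (sqf A) \<longleftrightarrow> m \<in> monoms \<and> A \<inter> supp m \<noteq> {}" for m A
    by (auto simp: irr_ideal_def sqf_def supp_def split: if_splits) (metis Suc_leI)
  have memJ: "m \<in> J \<longleftrightarrow> m \<in> monoms \<and> (\<exists>B\<in>F. B \<subseteq> supp m)" for m
    by (auto simp: J_def mono_ideal_def sqf_mdvd)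
  have dec: "irr_decomp J (sqf ` MT)"
    unfolding irr_decomp_def
  proof (intro conjI ballI)
    show "finite (sqf ` MT)" using finMT by simp
    show "sqf ` MT \<subseteq> monoms" using finA sqf_monoms by blast
    show "J = monoms \<inter> (\<Inter>b\<in>sqf ` MT. irr_ideal b)"
    proof
      show "J \<subseteq> monoms \<inter> (\<Inter>b\<in>sqf ` MT. irr_ideal b)"
      proof
        fix m assume "m \<in> J"
        then obtain B where m: "m \<in> monoms" "B \<in> F" "B \<subseteq> supp m" using memJ by blast
        have "A \<inter> supp m \<noteq> {}" if "A \<in> MT" for A
        proof -
          have "A \<inter> B \<noteq> {}" using mt_transv[of A F B] that m(2) by (simp add: MT_def)
          then show ?thesis using m(3) by blast
        qed
        then show "m \<in> monoms \<inter> (\<Inter>b\<in>sqf ` MT. irr_ideal b)" using m by (auto simp: irr_sqf)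
      qed
      show "monoms \<inter> (\<Inter>b\<in>sqf ` MT. irr_ideal b) \<subseteq> J"
      proof
        fix m assume m: "m \<in> monoms \<inter> (\<Inter>b\<in>sqf ` MT. irr_ideal b)"
        show "m \<in> J"
        proof (rule ccontr)
          assume "m \<notin> J"
          then have nB: "\<forall>B\<in>F. \<not> B \<subseteq> supp m" using m memJ by blast
          have "transv F (V - supp m)" using nB by (auto simp: transv_def V_def)
          then obtain A where A: "A \<in> MT" "A \<subseteq> V - supp m"
            using mintransv_exists[OF finF finB] by (auto simp: MT_def)
          then have "m \<in> irr_ideal (sqf A)" using m by blast
          then have "A \<inter> supp m \<noteq> {}" by (simp add: irr_sqf)
          then show False using A(2) by blast
        qed
      qed
    qed
    fix c assume c: "c \<in> sqf ` MT"
    then obtain A where A: "A \<in> MT" "c = sqf A" by blast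
    define m where "m = sqf (V - A)"
    have mm: "m \<in> monoms" using finV by (simp add: m_def sqf_monoms)
    have "m \<notin> J"
    proof
      assume "m \<in> J"
      then obtain B where "B \<in> F" "B \<subseteq> V - A" using memJ by (auto simp: m_def)
      then have "A \<inter> B \<noteq> {}" using mt_transv[of A F B] A(1) by (simp add: MT_def)
      then show False using \<open>B \<subseteq> V - A\<close> by blast
    qed
    moreover have "m \<in> irr_ideal c'" if c': "c' \<in> sqf ` MT - {c}" for c'
    proof -
      obtain A' where A': "A' \<in> MT" "c' = sqf A'" using c' by blast
      then have ne: "A' \<noteq> A" using c' A by blast
      have "\<not> A' \<subseteq> A"
      proof
        assume "A' \<subseteq> A"
        then have "A' = A" using A(1) A'(1) mt_min[of A F A'] by (simp add: MT_def)
        then show False using ne by simp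
      qed
      then obtain v where "v \<in> A'" "v \<notin> A" by blast
      then have "v \<in> A' \<inter> supp m" using MTV[OF A'(1)] by (auto simp: m_def)
      then show ?thesis using A'(2) mm by (auto simp: irr_sqf)
    qed
    ultimately show "J \<noteq> monoms \<inter> (\<Inter>c\<in>sqf ` MT - {c}. irr_ideal c)" using mm by blast
  qed
  have IrrJ: "Irr_set J = sqf ` MT" using Irr_set_eq[OF dec] .
  have finMG: "finite (mingens J)" using mgJ finF finite_subset by blast
  have lcm1: "lcm_exp J v = 1" if A: "A \<in> MT" "v \<in> A" for A v
  proof -
    obtain B where B: "B \<in> F'" "v \<in> B" using mintransv_crit[of A F' v] A MT' by auto
    have "lcm_exp J v = Max (insert 0 ((\<lambda>g. g v) ` mingens J))" by (simp add: lcm_exp_def)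
    also have "\<dots> = 1"
    proof (rule Max_eqI)
      show "finite (insert 0 ((\<lambda>g. g v) ` mingens J))" using finMG by simp
      show "y \<le> 1" if "y \<in> insert 0 ((\<lambda>g. g v) ` mingens J)" for y
        using that mgJ by (auto simp: sqf_def)
      show "1 \<in> insert 0 ((\<lambda>g. g v) ` mingens J)"
        using B by (auto simp: F'_def sqf_def intro!: image_eqI[of _ _ "sqf B"])
    qed
    finally show ?thesis .
  qed
  have eqs: "dual_exp (lcm_exp J) (sqf A) = sqf A" if "A \<in> MT" for A
    using lcm1[OF that] by (auto simp: dual_exp_def sqf_def)
  have "dual_exp (lcm_exp J) ` (sqf ` MT) = (\<lambda>A. dual_exp (lcm_exp J) (sqf A)) ` MT"
    by (simp add: image_image)
  also have "\<dots> = sqf ` MT" by (rule image_cong) (simp_all add: eqs)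
  finally have "dual_exp (lcm_exp J) ` Irr_set J = sqf ` MT" unfolding IrrJ .
  then have AD: "alex_dual J = mono_ideal (sqf ` MT)" by (simp add: alex_dual_def)
  show ?thesis
  proof -
    have "m \<in> mono_ideal (sqf ` MT) \<longleftrightarrow> m \<in> monoms \<and> transv F (supp m)" for m
    proof
      assume "m \<in> mono_ideal (sqf ` MT)"
      then obtain A where "m \<in> monoms" "A \<in> MT" "A \<subseteq> supp m" by (auto simp: mono_ideal_def sqf_mdvd)
      moreover have "transv F A" using \<open>A \<in> MT\<close> by (simp add: MT_def mintransv_def)
      ultimately show "m \<in> monoms \<and> transv F (supp m)" unfolding transv_def by blast
    next
      assume m: "m \<in> monoms \<and> transv F (supp m)"
      then obtain A where "A \<in> MT" "A \<subseteq> supp m" using mintransv_exists[OF finF finB] MT_def by blast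
      then show "m \<in> mono_ideal (sqf ` MT)" using m by (auto simp: mono_ideal_def sqf_mdvd)
    qed
    then show ?thesis using AD J_def by auto
  qed
qed



lemma perv:
  fixes q :: "nat \<Rightarrow> bool" and bv av :: nat
  assumes "1 \<le> bv"
  shows "(\<exists>l. 1 \<le> l \<and> l \<le> av + 1 - bv \<and> q l) \<longleftrightarrow>
         bv \<le> (if \<exists>l. 1 \<le> l \<and> q l then av + 1 - (LEAST l. 1 \<le> l \<and> q l) else 0)"
proof (cases "\<exists>l. 1 \<le> l \<and> q l")
  case True
  define f where "f = (LEAST l. 1 \<le> l \<and> q l)"
  have f1: "1 \<le> f \<and> q f" unfolding f_def using LeastI_ex[OF True] .
  have fl: "f \<le> l" if "1 \<le> l \<and> q l" for l unfolding f_def using that by (rule Least_le)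
  have "(\<exists>l. 1 \<le> l \<and> l \<le> av + 1 - bv \<and> q l) \<longleftrightarrow> bv \<le> av + 1 - f"
  proof
    assume "\<exists>l. 1 \<le> l \<and> l \<le> av + 1 - bv \<and> q l"
    then obtain l where l: "1 \<le> l" "l \<le> av + 1 - bv" "q l" by blast
    then have "f \<le> l" using fl by blast
    then show "bv \<le> av + 1 - f" using l(1,2) f1 assms by linarith
  next
    assume h: "bv \<le> av + 1 - f"
    have "f \<le> av + 1 - bv" using h f1 assms by linarith
    then show "\<exists>l. 1 \<le> l \<and> l \<le> av + 1 - bv \<and> q l" using f1 by blast
  qed
  then show ?thesis using True by (simp add: f_def)
next
  case False
  then show ?thesis using assms by auto
qed

theorem lemma5p5:
  fixes n :: nat and E :: "(nat \<times> nat) set" and w :: "nat \<Rightarrow> nat"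
  assumes "weighted_oriented_graph n E w"
  shows "alex_dual (pol (alex_dual (wog_ideal E w))) = edge_ideal (GD_edges E w)"
proof -
  have Esub: "E \<subseteq> {1..n} \<times> {1..n}" and irrE: "\<And>i j. (i,j) \<in> E \<Longrightarrow> i \<noteq> j \<and> (j,i) \<notin> E"
    and wpos: "\<And>k. k \<in> {1..n} \<Longrightarrow> 0 < w k"
    and src: "\<And>k. k \<in> {1..n} \<Longrightarrow> source E k \<Longrightarrow> w k = 1"
    using assms unfolding weighted_oriented_graph_def by auto
  have finE: "finite E" using Esub finite_subset by blast
  have wE: "1 \<le> w i \<and> 1 \<le> w j" if "(i,j) \<in> E" for i j
    using that Esub wpos by (metis One_nat_def Suc_leI mem_Sigma_iff subsetD)
  define GI where "GI = {edge_mono w i j | i j. (i,j) \<in> E}"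
  have GI_img: "GI = (\<lambda>(i,j). edge_mono w i j) ` E" by (auto simp: GI_def)
  have finGI: "finite GI" using GI_img finE by simp
  have em_m: "edge_mono w i j \<in> monoms" for i j
  proof -
    have "{v. edge_mono w i j v \<noteq> 0} \<subseteq> {i,j}" by (auto simp: edge_mono_def split: if_splits)
    then show ?thesis unfolding monoms_def using finite_subset[of _ "{i,j}"] by simp
  qed
  have GIm: "GI \<subseteq> monoms" using em_m by (auto simp: GI_def)
  define I where "I = wog_ideal E w"
  have I_eq: "I = mono_ideal GI" by (simp add: I_def wog_ideal_def GI_def)
  obtain S0 where "irr_decomp I S0" using decomp_exists[OF finGI GIm] I_eq by blast
  define S where "S = Irr_set I"
  have dec: "irr_decomp I S" using Irr_set_eq[OF \<open>irr_decomp I S0\<close>] \<open>irr_decomp I S0\<close> by (simp add: S_def)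
  have IS: "I = irr_int S" and finS: "finite S" and Sm: "S \<subseteq> monoms"
    using dec by (auto simp: irr_decomp_def irr_int_def)
  define a where "a = lcm_exp I"
  have anti: "h = g" if gG: "g \<in> GI" and hG: "h \<in> GI" and hg: "mdvd h g" for g h
  proof -
    obtain i j where ij: "(i,j) \<in> E" "g = edge_mono w i j" using gG by (auto simp: GI_def)
    obtain k l where kl: "(k,l) \<in> E" "h = edge_mono w k l" using hG by (auto simp: GI_def)
    have d: "h v \<le> g v" for v using hg by (simp add: mdvd_def)
    have ij': "i \<noteq> j" "(j,i) \<notin> E" using irrE[OF ij(1)] by auto
    have kl': "k \<noteq> l" using irrE[OF kl(1)] by auto
    have "h k = 1" using kl kl' by (simp add: edge_mono_def)
    then have "1 \<le> g k" using d[of k] by simp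
    then have k: "k = i \<or> k = j" using ij by (auto simp: edge_mono_def split: if_splits)
    have "h l = w l" using kl kl' by (simp add: edge_mono_def)
    then have "1 \<le> g l" using d[of l] wE[OF kl(1)] by simp
    then have l: "l = i \<or> l = j" using ij by (auto simp: edge_mono_def split: if_splits)
    have "k = i \<and> l = j" using k l kl' ij' kl(1) by auto
    then show ?thesis using ij kl by simp
  qed
  have mgI: "mingens I = GI" using mingens_antichain[OF GIm anti] I_eq by simp
  have aval: "a v = w v" if ijE: "(i,j) \<in> E" and vij: "v = i \<or> v = j" for i j v
  proof -
    have vn: "v \<in> {1..n}" using ijE vij Esub by auto
    have wv: "1 \<le> w v" using wpos[OF vn] by simp
    have "a v = Max (insert 0 ((\<lambda>g. g v) ` GI))" by (simp add: a_def lcm_exp_def mgI)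
    also have "\<dots> = w v"
    proof (rule Max_eqI)
      show "finite (insert 0 ((\<lambda>g. g v) ` GI))" using finGI by simp
      show "y \<le> w v" if "y \<in> insert 0 ((\<lambda>g. g v) ` GI)" for y
      proof -
        consider "y = 0" | k l where "(k,l) \<in> E" "y = edge_mono w k l v"
          using \<open>y \<in> insert 0 ((\<lambda>g. g v) ` GI)\<close> by (auto simp: GI_def)
        then show ?thesis
        proof cases
          case 1 then show ?thesis by simp
        next
          case 2
          have "k \<noteq> l" using irrE[OF 2(1)] by simp
          then show ?thesis using 2 wv by (auto simp: edge_mono_def)
        qed
      qed
      show "w v \<in> insert 0 ((\<lambda>g. g v) ` GI)"
      proof (cases "\<exists>k. (k,v) \<in> E")
        case True
        then obtain k where k: "(k,v) \<in> E" by blast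
        then have "k \<noteq> v" using irrE by blast
        then have "edge_mono w k v v = w v" by (simp add: edge_mono_def)
        moreover have "edge_mono w k v \<in> GI" using k by (auto simp: GI_def)
        ultimately show ?thesis by (metis image_eqI insertI2)
      next
        case False
        then have "source E v" by (simp add: source_def)
        then have w1: "w v = 1" using src vn by blast
        have "v = i" using False ijE vij by blast
        then have "edge_mono w v j v = 1" using irrE[OF ijE] by (simp add: edge_mono_def)
        moreover have "edge_mono w v j \<in> GI" using ijE \<open>v = i\<close> by (auto simp: GI_def)
        ultimately show ?thesis using w1 by (metis image_eqI insertI2)
      qed
    qed
    finally show ?thesis .
  qed
  define D where "D = dual_exp a ` S"
  have Dm: "D \<subseteq> monoms"
  proof
    fix e assume "e \<in> D"
    then obtain b where b: "b \<in> S" "e = dual_exp a b" by (auto simp: D_def)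
    have "{v. e v \<noteq> 0} \<subseteq> {v. b v \<noteq> 0}" using b(2) by (auto simp: dual_exp_def)
    moreover have "finite {v. b v \<noteq> 0}" using b(1) Sm by (auto simp: monoms_def)
    ultimately show "e \<in> monoms" unfolding monoms_def using finite_subset by blast
  qed
  have finD: "finite D" using finS by (simp add: D_def)
  define K where "K = alex_dual I"
  have K_eq: "K = mono_ideal D" by (simp add: K_def alex_dual_def D_def a_def S_def)
  define PS where "PS e = {(v,l). 1 \<le> l \<and> l \<le> e v}" for e :: "nat \<Rightarrow> nat"
  have pol_sqf: "pol_mono e = sqf (PS e)" for e
    by (rule ext) (auto simp: pol_mono_def sqf_def PS_def split: if_splits)
  have PS_fin: "finite (PS e)" if "e \<in> monoms" for e
  proof -
    have "PS e \<subseteq> Sigma {v. e v \<noteq> 0} (\<lambda>v. {1..e v})" by (auto simp: PS_def)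
    moreover have "finite (Sigma {v. e v \<noteq> 0} (\<lambda>v. {1..e v}))"
      using that by (intro finite_SigmaI) (auto simp: monoms_def)
    ultimately show ?thesis using finite_subset by blast
  qed
  define F where "F = PS ` mingens K"
  have mgK: "mingens K \<subseteq> D" unfolding K_eq by (rule mingens_mono_ideal_sub[OF Dm])
  have polK: "pol K = mono_ideal (sqf ` F)"
  proof -
    have "pol_mono ` mingens K = sqf ` F" unfolding F_def image_image pol_sqf ..
    then show ?thesis by (simp add: pol_def)
  qed
  have finF: "finite F" using mgK finD finite_subset unfolding F_def by blast
  have finB: "\<forall>B\<in>F. finite B" using mgK Dm PS_fin unfolding F_def by blast
  have LHS: "alex_dual (pol K) = {m \<in> monoms. transv F (supp m)}"
    unfolding polK by (rule sqf_dual[OF finF finB])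
  have L0: "alex_dual (pol (alex_dual (wog_ideal E w))) = {m \<in> monoms. transv F (supp m)}"
    using LHS unfolding K_def I_def .
  show ?thesis
  proof (rule set_eqI)
    fix m :: "nat \<times> nat \<Rightarrow> nat"
    have RHS: "m \<in> edge_ideal (GD_edges E w) \<longleftrightarrow> m \<in> monoms \<and>
       (\<exists>i j l. (i,j) \<in> E \<and> 1 \<le> l \<and> l \<le> w i \<and> m (i,l) \<noteq> 0 \<and> m (j,1) \<noteq> 0)"
    proof -
      have A1: "m \<in> edge_ideal (GD_edges E w) \<longleftrightarrow> m \<in> monoms \<and> (\<exists>e\<in>GD_edges E w. e \<subseteq> supp m)"
        by (auto simp: edge_ideal_def mono_ideal_def sqf_mdvd)
      have A2: "(\<exists>e\<in>GD_edges E w. e \<subseteq> supp m) \<longleftrightarrow>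
         (\<exists>i j l. (i,j) \<in> E \<and> 1 \<le> l \<and> l \<le> w i \<and> m (i,l) \<noteq> 0 \<and> m (j,1) \<noteq> 0)"
      proof
        assume "\<exists>e\<in>GD_edges E w. e \<subseteq> supp m"
        then obtain e where e: "e \<in> GD_edges E w" "e \<subseteq> supp m" by blast
        then obtain i j l where "(i,j) \<in> E" "1 \<le> l" "l \<le> w i" "e = {(i,l),(j,1)}"
          unfolding GD_edges_def by blast
        then show "\<exists>i j l. (i,j) \<in> E \<and> 1 \<le> l \<and> l \<le> w i \<and> m (i,l) \<noteq> 0 \<and> m (j,1) \<noteq> 0"
          using e(2) unfolding supp_def by blast
      next
        assume "\<exists>i j l. (i,j) \<in> E \<and> 1 \<le> l \<and> l \<le> w i \<and> m (i,l) \<noteq> 0 \<and> m (j,1) \<noteq> 0"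
        then obtain i j l where ijl: "(i,j) \<in> E" "1 \<le> l" "l \<le> w i" "m (i,l) \<noteq> 0" "m (j,1) \<noteq> 0" by blast
        have "{(i,l),(j,1)} \<in> GD_edges E w" unfolding GD_edges_def
          using ijl(1-3) by (intro UN_I[of "(i,j)"]) auto
        moreover have "{(i,l),(j,1)} \<subseteq> supp m" using ijl(4,5) by (simp add: supp_def)
        ultimately show "\<exists>e\<in>GD_edges E w. e \<subseteq> supp m" by blast
      qed
      show ?thesis using A1 A2 by simp
    qed
    show "m \<in> alex_dual (pol (alex_dual (wog_ideal E w))) \<longleftrightarrow> m \<in> edge_ideal (GD_edges E w)"
    proof (cases "m \<in> monoms")
      case False
      have "m \<notin> alex_dual (pol (alex_dual (wog_ideal E w)))" unfolding L0 using False by simp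
      moreover have "m \<notin> edge_ideal (GD_edges E w)" using RHS False by simp
      ultimately show ?thesis by simp
    next
      case mm: True
      define P where "P e = (\<exists>v l. 1 \<le> l \<and> l \<le> e v \<and> m (v,l) \<noteq> 0)" for e :: "nat \<Rightarrow> nat"
      have s1a: "supp m \<inter> PS e \<noteq> {} \<longleftrightarrow> P e" for e
      proof
        assume "supp m \<inter> PS e \<noteq> {}"
        then obtain v l where "(v,l) \<in> supp m" "(v,l) \<in> PS e" by auto
        then show "P e" unfolding P_def supp_def PS_def by auto
      next
        assume "P e"
        then obtain v l where "1 \<le> l" "l \<le> e v" "m (v,l) \<noteq> 0" unfolding P_def by blast
        then have "(v,l) \<in> supp m \<inter> PS e" unfolding supp_def PS_def by simp
        then show "supp m \<inter> PS e \<noteq> {}" by blast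
      qed
      have s1: "transv F (supp m) \<longleftrightarrow> (\<forall>e\<in>mingens K. P e)"
        unfolding transv_def F_def by (simp add: s1a)
      have up: "P e'" if "mdvd e e'" "P e" for e e'
        using that unfolding P_def mdvd_def by (meson le_trans)
      have s2: "(\<forall>e\<in>mingens K. P e) \<longleftrightarrow> (\<forall>e\<in>D. P e)"
        unfolding K_eq by (rule mingens_forall[OF Dm up])
      define y where "y v = (if \<exists>l. 1 \<le> l \<and> m (v,l) \<noteq> 0
          then a v + 1 - (LEAST l. 1 \<le> l \<and> m (v,l) \<noteq> 0) else 0)" for v
      have pv: "(\<exists>l. 1 \<le> l \<and> l \<le> a v + 1 - bv \<and> m (v,l) \<noteq> 0) \<longleftrightarrow> bv \<le> y v"
        if "1 \<le> bv" for v bv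
        unfolding y_def using perv[OF that, of "a v" "\<lambda>l. m (v,l) \<noteq> 0"] by simp
      have s3: "P (dual_exp a b) \<longleftrightarrow> (\<exists>v. 1 \<le> b v \<and> b v \<le> y v)" for b
      proof -
        have "P (dual_exp a b) \<longleftrightarrow> (\<exists>v. 1 \<le> b v \<and> (\<exists>l. 1 \<le> l \<and> l \<le> a v + 1 - b v \<and> m (v,l) \<noteq> 0))"
          unfolding P_def dual_exp_def by auto
        also have "\<dots> \<longleftrightarrow> (\<exists>v. 1 \<le> b v \<and> b v \<le> y v)" using pv by blast
        finally show ?thesis .
      qed
      have ym: "y \<in> monoms"
      proof -
        have "{v. y v \<noteq> 0} \<subseteq> fst ` {p. m p \<noteq> 0}"
        proof
          fix v assume "v \<in> {v. y v \<noteq> 0}"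
          then obtain l where "m (v,l) \<noteq> 0" by (auto simp: y_def split: if_splits)
          then show "v \<in> fst ` {p. m p \<noteq> 0}" by (metis (mono_tags, lifting) fst_conv image_eqI mem_Collect_eq)
        qed
        moreover have "finite (fst ` {p. m p \<noteq> 0})" using mm by (simp add: monoms_def)
        ultimately show ?thesis unfolding monoms_def using finite_subset by blast
      qed
      have s4: "(\<forall>b\<in>S. \<exists>v. 1 \<le> b v \<and> b v \<le> y v) \<longleftrightarrow> y \<in> I"
        unfolding IS irr_int_def irr_ideal_def using ym by blast
      have emd: "mdvd (edge_mono w i j) y \<longleftrightarrow> 1 \<le> y i \<and> w j \<le> y j" if "i \<noteq> j" for i j
      proof
        assume "mdvd (edge_mono w i j) y"
        then have "edge_mono w i j i \<le> y i" "edge_mono w i j j \<le> y j" by (auto simp: mdvd_def)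
        then show "1 \<le> y i \<and> w j \<le> y j" using that by (simp add: edge_mono_def)
      next
        assume "1 \<le> y i \<and> w j \<le> y j"
        then show "mdvd (edge_mono w i j) y" using that by (auto simp: mdvd_def edge_mono_def)
      qed
      have s5: "y \<in> I \<longleftrightarrow> (\<exists>i j. (i,j) \<in> E \<and> 1 \<le> y i \<and> w j \<le> y j)"
      proof -
        have "y \<in> I \<longleftrightarrow> (\<exists>i j. (i,j) \<in> E \<and> mdvd (edge_mono w i j) y)"
          unfolding I_eq mono_ideal_def GI_def using ym by blast
        also have "\<dots> \<longleftrightarrow> (\<exists>i j. (i,j) \<in> E \<and> 1 \<le> y i \<and> w j \<le> y j)"
          using emd irrE by blast
        finally show ?thesis .
      qed
      have s6: "1 \<le> y i \<longleftrightarrow> (\<exists>l. 1 \<le> l \<and> l \<le> w i \<and> m (i,l) \<noteq> 0)" if "(i,j) \<in> E" for i j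
        using pv[of 1 i] aval[OF that, of i] by simp
      have s7: "w j \<le> y j \<longleftrightarrow> m (j,1) \<noteq> 0" if "(i,j) \<in> E" for i j
      proof -
        have "w j \<le> y j \<longleftrightarrow> (\<exists>l. 1 \<le> l \<and> l \<le> a j + 1 - w j \<and> m (j,l) \<noteq> 0)"
          using pv[of "w j" j] wE[OF that] by simp
        also have "\<dots> \<longleftrightarrow> (\<exists>l. 1 \<le> l \<and> l \<le> 1 \<and> m (j,l) \<noteq> 0)" using aval[OF that, of j] by simp
        also have "\<dots> \<longleftrightarrow> m (j,1) \<noteq> 0" by (metis le_antisym order_refl)
        finally show ?thesis .
      qed
      have "m \<in> alex_dual (pol (alex_dual (wog_ideal E w))) \<longleftrightarrow> transv F (supp m)"
        unfolding L0 using mm by blast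
      also have "\<dots> \<longleftrightarrow> (\<forall>b\<in>S. P (dual_exp a b))" using s1 s2 D_def by simp
      also have "\<dots> \<longleftrightarrow> y \<in> I" using s3 s4 by simp
      also have "\<dots> \<longleftrightarrow> (\<exists>i j. (i,j) \<in> E \<and> (\<exists>l. 1 \<le> l \<and> l \<le> w i \<and> m (i,l) \<noteq> 0) \<and> m (j,1) \<noteq> 0)"
        using s5 s6 s7 by blast
      also have "\<dots> \<longleftrightarrow> m \<in> edge_ideal (GD_edges E w)" using RHS mm by blast
      finally show ?thesis .
    qed
  qed
qed

end
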